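(* Fix $\alpha>0$. As $\Gamma\to\infty$, each of the following three upper bounds on $F_\alpha(\Gamma)$ has the form $\alpha\log(\Gamma)+c_{\alpha}+o(1)$: (i) the channel coding converse bound $\min\{2E_0(\alpha,\Gamma),\gamma_\alpha\Gamma\}$, with $c_\alpha=\alpha-(1+\alpha)\log(1+\alpha)$; (ii) the spherical cap bound (equal to $\gamma_\alpha\Gamma$ for $\Gamma<\alpha/\gamma_\alpha$ and to $\alpha[\log(\gamma_\alpha\Gamma/\alpha)+1]$ for $\Gamma\ge\alpha/\gamma_\alpha$), with $c_\alpha=\alpha\log(\gamma_\alpha/\alpha)+\alpha$; (iii) for $\alpha\ge2$, the spectrum replication bound $\gamma_{\alpha}\Gamma-[\alpha\Lambda_{\alpha}(\Gamma)]_{+}$, with $c_\alpha=\alpha\log(e/8)$. Moreover, for $\alpha<2$, when $\gamma_\alpha$ in the spectrum replication bound is replaced by the upper bound $\bar\gamma_\alpha$ below, the resulting bound increases linearly with $\Gamma$ as $\Gamma\to\infty$.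
   Context: $\Gamma>0$ is the SNR, $F_\alpha(\Gamma)$ is the optimal MP$\alpha$E exponent per unit bandwidth for conveying a parameter $u\in[0,1)$ over a band-limited AWGN channel (largest achievable exponent of $\sup_u\mathbb{E}_u|\hat u-u|^\alpha$ divided by the bandwidth $W$, with $\Gamma=P/(N_0W)$), and $\gamma_\alpha=\lim_{\Gamma\to0}F_\alpha(\Gamma)/\Gamma$ is the unlimited-bandwidth MP$\alpha$E exponent; for $\alpha\ge2$ one has $\gamma_\alpha=\frac{\alpha}{2(1+\alpha)}$. Definitions: $E_{0}(\rho,\Gamma)=\frac{1}{2}\left[(1-\beta_{0})(1+\rho)+\Gamma+\log\left(\beta_{0}-\frac{\Gamma}{1+\rho}\right)+\rho\log(\beta_{0})\right]$ with $\beta_{0}=\frac{1}{2}\left(1+\frac{\Gamma}{1+\rho}\right)\left[1+\sqrt{1-\frac{4\Gamma\rho}{(1+\rho+\Gamma)^{2}}}\right]$; $[t]_+=\max\{t,0\}$, $\Lambda_{\alpha}(\Gamma)=\sup_{0<\rho\leq1}\frac{\Phi(\rho,\Gamma)-\gamma_{\alpha}\Gamma}{\rho}$, $\Phi(\rho,\Gamma)=\rho[\eta-1-\log\eta]+\eta+\Gamma+\log\left[\frac{\sqrt{4\eta\Gamma+1}+1}{2\eta}\right]-\sqrt{4\eta\Gamma+1}$ with $\eta=\frac{\Gamma+\sqrt{\Gamma^{2}-4(\rho^{2}+1)(\rho+1)^{2}}}{2(\rho+1)^{2}}$. The upper bound $\bar\gamma_\alpha\ge\gamma_\alpha$ is: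 $\bar\gamma_\alpha=\frac{1}{1+\alpha}\min\{\alpha,\psi(\alpha)\}$ for $0<\alpha\le\alpha_0$; $\bar\gamma_\alpha=\frac{\alpha}{2(1+\alpha)}\left[1+\frac{\alpha+5-4\sqrt{\alpha+1}}{3\alpha+1}\right]$ for $\alpha_0\le\alpha\le2$; $\bar\gamma_\alpha=\frac{\alpha}{2(1+\alpha)}$ for $\alpha\ge2$, where $\alpha_0\approx1.5875$ is the unique root of $\alpha^2-(\alpha-1)\sqrt{\alpha+1}-2=0$ and $\psi(\alpha)=1+\alpha-\max_{q\ge1/2}[2\alpha q+4q\sqrt{(1-q)q(1+\alpha)}-q^2(3\alpha+1)]$. Logarithms are natural. *)

theory Defs
  imports "HOL-Analysis.Analysis"
begin

definition beta0 :: "real \<Rightarrow> real \<Rightarrow> real" where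
  "beta0 \<rho> \<Gamma> = (1/2) * (1 + \<Gamma> / (1 + \<rho>)) *
      (1 + sqrt (1 - 4 * \<Gamma> * \<rho> / (1 + \<rho> + \<Gamma>)^2))"

definition E0 :: "real \<Rightarrow> real \<Rightarrow> real" where
  "E0 \<rho> \<Gamma> = (1/2) * ((1 - beta0 \<rho> \<Gamma>) * (1 + \<rho>) + \<Gamma>
      + ln (beta0 \<rho> \<Gamma> - \<Gamma> / (1 + \<rho>)) + \<rho> * ln (beta0 \<rho> \<Gamma>))"

definition pos_part :: "real \<Rightarrow> real" where
  "pos_part t = max t 0"

definition eta_fn :: "real \<Rightarrow> real \<Rightarrow> real" where
  "eta_fn \<rho> \<Gamma> = (\<Gamma> + sqrt (\<Gamma>^2 - 4 * (\<rho>^2 + 1) * (\<rho> + 1)^2)) / (2 * (\<rho> + 1)^2)"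

definition Phi :: "real \<Rightarrow> real \<Rightarrow> real" where
  "Phi \<rho> \<Gamma> = (let \<eta> = eta_fn \<rho> \<Gamma> in
      \<rho> * (\<eta> - 1 - ln \<eta>) + \<eta> + \<Gamma>
      + ln ((sqrt (4 * \<eta> * \<Gamma> + 1) + 1) / (2 * \<eta>)) - sqrt (4 * \<eta> * \<Gamma> + 1))"

text \<open>Lambda, parametrised by the value g used in place of gamma_alpha.\<close>
definition Lambda :: "real \<Rightarrow> real \<Rightarrow> real" where
  "Lambda g \<Gamma> = (SUP \<rho>\<in>{0<..1}. (Phi \<rho> \<Gamma> - g * \<Gamma>) / \<rho>)"

definition converse_bound :: "real \<Rightarrow> real \<Rightarrow> real \<Rightarrow> real" where
  "converse_bound \<alpha> g \<Gamma> = min (2 * E0 \<alpha> \<Gamma>) (g * \<Gamma>)"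

definition cap_bound :: "real \<Rightarrow> real \<Rightarrow> real \<Rightarrow> real" where
  "cap_bound \<alpha> g \<Gamma> =
     (if \<Gamma> < \<alpha> / g then g * \<Gamma> else \<alpha> * (ln (g * \<Gamma> / \<alpha>) + 1))"

definition replication_bound :: "real \<Rightarrow> real \<Rightarrow> real \<Rightarrow> real" where
  "replication_bound \<alpha> g \<Gamma> = g * \<Gamma> - pos_part (\<alpha> * Lambda g \<Gamma>)"

definition alpha0 :: real where
  "alpha0 = (THE a. 0 < a \<and> a^2 - (a - 1) * sqrt (a + 1) - 2 = 0)"

definition psi :: "real \<Rightarrow> real" where
  "psi \<alpha> = 1 + \<alpha> - (SUP q\<in>{1/2..1}.
      2 * \<alpha> * q + 4 * q * sqrt ((1 - q) * q * (1 + \<alpha>)) - q^2 * (3 * \<alpha> + 1))"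

definition gamma_bar :: "real \<Rightarrow> real" where
  "gamma_bar \<alpha> =
     (if \<alpha> \<le> alpha0 then (1 / (1 + \<alpha>)) * min \<alpha> (psi \<alpha>)
      else if \<alpha> \<le> 2 then \<alpha> / (2 * (1 + \<alpha>)) *
             (1 + (\<alpha> + 5 - 4 * sqrt (\<alpha> + 1)) / (3 * \<alpha> + 1))
      else \<alpha> / (2 * (1 + \<alpha>)))"

end

theory Submission
  imports Defs "HOL-Real_Asymp.Real_Asymp"
begin

lemma S_lim:
  assumes "0 < (a::real)"
  shows "((\<lambda>G. sqrt ((G+1-a)^2 + 4*a) - G) \<longlongrightarrow> 1 - a) at_top"
  using assms by real_asymp

lemma beta0_eq:
  assumes "0 < (a::real)" "0 < G"
  shows "beta0 a G = (G+1+a+sqrt ((G+1-a)^2 + 4*a))/(2*(1+a))"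
proof -
  have pos: "1+a+G > 0" using assms by simp
  have e1: "(1+a+G)^2 - 4 * G * a = (G+1-a)^2 + 4*a" by (simp add: power2_eq_square algebra_simps)
  have "1 - 4 * G * a / (1 + a + G)^2 = ((1+a+G)^2 - 4 * G * a) / (1+a+G)^2"
    using pos by (simp add: field_simps)
  hence "1 - 4 * G * a / (1 + a + G)^2 = ((G+1-a)^2 + 4*a) / (1+a+G)^2" using e1 by simp
  hence "sqrt (1 - 4 * G * a / (1 + a + G)^2) = sqrt ((G+1-a)^2 + 4*a) / (1+a+G)"
    using pos by (simp add: real_sqrt_divide)
  thus ?thesis unfolding beta0_def using pos assms by (simp add: field_simps)
qed

lemma E0_eq:
  assumes "0 < (a::real)" "0 < G"
  shows "2 * E0 a G - a * ln G = (1+a+G- sqrt ((G+1-a)^2 + 4*a))/2 + ln ((1+a-G+sqrt ((G+1-a)^2 + 4*a))/(2*(1+a)))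
      + a * ln ((G+1+a+sqrt ((G+1-a)^2 + 4*a))/(2*(1+a)*G))"
proof -
  define S where "S = sqrt ((G+1-a)^2 + 4*a)"
  have Sge: "S \<ge> 0" unfolding S_def using assms by simp
  have b: "beta0 a G = (G+1+a+S)/(2*(1+a))" using beta0_eq[OF assms] S_def by simp
  have bpos: "beta0 a G > 0" using b Sge assms by simp
  have c1: "beta0 a G - G/(1+a) = (1+a-G+S)/(2*(1+a))" using b assms by (simp add: field_simps)
  have c2: "ln (beta0 a G) - ln G = ln ((G+1+a+S)/(2*(1+a)*G))"
  proof -
    have "(G+1+a+S)/(2*(1+a)*G) = beta0 a G / G" unfolding b by (simp add: divide_divide_eq_left)
    thus ?thesis using bpos assms by (simp add: ln_div)
  qed
  have c3: "(1 - beta0 a G) * (1 + a) + G = (1+a+G-S)/2" using b assms by (simp add: field_simps)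
  have e: "2*E0 a G - a*ln G = ((1 - beta0 a G) * (1 + a) + G) + ln (beta0 a G - G/(1+a)) + a * (ln (beta0 a G) - ln G)"
    unfolding E0_def by (simp add: algebra_simps)
  show ?thesis unfolding S_def[symmetric] by (simp only: e c1 c2 c3)
qed

lemma E0_lim:
  assumes "0 < (a::real)"
  shows "((\<lambda>G. 2 * E0 a G - a * ln G) \<longlongrightarrow> a - (1+a)*ln(1+a)) at_top"
proof -
  define D where "D = (\<lambda>G. sqrt ((G+1-a)^2 + 4*a) - G)"
  have D: "(D \<longlongrightarrow> 1 - a) at_top" unfolding D_def using S_lim[OF assms] .
  have t1: "((\<lambda>G. (1+a - D G)/2) \<longlongrightarrow> (1+a-(1-a))/2) at_top"
    by (intro tendsto_intros D) auto
  have t2: "((\<lambda>G. ln ((1+a + D G)/(2*(1+a)))) \<longlongrightarrow> ln ((1+a+(1-a))/(2*(1+a)))) at_top"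
    using assms by (intro tendsto_intros D) auto
  have inv: "((\<lambda>G::real. 1/G) \<longlongrightarrow> 0) at_top" by real_asymp
  have t3: "((\<lambda>G. a * ln ((2 + (1+a + D G) * (1/G))/(2*(1+a)))) \<longlongrightarrow> a * ln ((2 + (1+a+(1-a))*0)/(2*(1+a)))) at_top"
    using assms by (intro tendsto_intros D inv) auto
  have L: "((\<lambda>G. (1+a - D G)/2 + ln ((1+a + D G)/(2*(1+a))) + a * ln ((2 + (1+a + D G) * (1/G))/(2*(1+a))))
     \<longlongrightarrow> (1+a-(1-a))/2 + ln ((1+a+(1-a))/(2*(1+a))) + a * ln ((2 + (1+a+(1-a))*0)/(2*(1+a)))) at_top"
    by (intro tendsto_add t1 t2 t3)
  have Ceq: "(1+a-(1-a))/2 + ln ((1+a+(1-a))/(2*(1+a))) + a * ln ((2 + (1+a+(1-a))*0)/(2*(1+a)))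
     = a - (1+a)*ln(1+a)"
  proof -
    have "(1+a+(1-a))/(2*(1+a)) = 1/(1+a)" "(2 + (1+a+(1-a))*0)/(2*(1+a)) = 1/(1+a)" using assms by (simp_all add: field_simps)
    moreover have "ln (1/(1+a)) = - ln (1+a)" using assms by (simp add: ln_div)
    ultimately show ?thesis by (simp add: algebra_simps)
  qed
  have EV: "\<forall>\<^sub>F G in at_top. (1+a - D G)/2 + ln ((1+a + D G)/(2*(1+a))) + a * ln ((2 + (1+a + D G) * (1/G))/(2*(1+a)))
     = 2 * E0 a G - a * ln G"
    using eventually_gt_at_top[of 0]
  proof eventually_elim
    case (elim G)
    have "(2 + (1+a + D G) * (1/G))/(2*(1+a)) = (G+1+a+sqrt ((G+1-a)^2 + 4*a))/(2*(1+a)*G)"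
      using elim assms unfolding D_def by (simp add: field_simps)
    thus ?case using E0_eq[OF assms elim] unfolding D_def by (simp add: algebra_simps)
  qed
  show ?thesis using Lim_transform_eventually[OF L[unfolded Ceq] EV] .
qed

lemma c_bounds:
  fixes \<rho> :: real assumes "0 < \<rho>" "\<rho> \<le> 1"
  shows "1 \<le> (\<rho>^2+1)*(\<rho>+1)^2" "(\<rho>^2+1)*(\<rho>+1)^2 \<le> 8"
proof -
  have a: "1 \<le> \<rho>^2+1" "\<rho>^2+1 \<le> 2" using assms by (auto simp: power_le_one)
  have b: "1 \<le> (\<rho>+1)^2" "(\<rho>+1)^2 \<le> 4" using assms power_mono[of "\<rho>+1" 2 2] by auto
  show "1 \<le> (\<rho>^2+1)*(\<rho>+1)^2" using a b by (metis mult_mono' one_le_power order_trans mult_1_left zero_le_one)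
  show "(\<rho>^2+1)*(\<rho>+1)^2 \<le> 8" using mult_mono[OF a(2) b(2)] by simp
qed

lemma sqrt_lower:
  fixes G c :: real assumes "0 < G" "0 \<le> c" "4*c \<le> G^2"
  shows "G - 4*c/G \<le> sqrt (G^2 - 4*c)" "sqrt (G^2 - 4*c) \<le> G"
proof -
  have e: "(G - 4*c/G)^2 = G^2 - 8*c + 16*c^2/G^2" using assms
      by (simp add: power2_eq_square field_simps)
  have "16*c^2/G^2 \<le> 4*c"
  proof -
    have "16*c^2 \<le> 4*c*G^2" using assms(2,3) mult_left_mono[of "4*c" "G^2" "4*c"] by (simp add: power2_eq_square)
    thus ?thesis using assms(1) by (simp add: divide_le_eq)
  qed
  hence "(G - 4*c/G)^2 \<le> G^2 - 4*c" using e by simp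
  thus "G - 4*c/G \<le> sqrt (G^2 - 4*c)" by (rule real_le_rsqrt)
  have "sqrt (G^2 - 4*c) \<le> sqrt (G^2)" using assms by (intro real_sqrt_le_mono) simp
  thus "sqrt (G^2 - 4*c) \<le> G" using assms by simp
qed

lemma PA_bound:
  fixes P A G :: real assumes "0 \<le> A" "G/2 \<le> P" "0 < G" "\<bar>P^2 - A^2\<bar> \<le> 1"
  shows "\<bar>P - A\<bar> \<le> 2/G"
proof -
  have pa: "0 \<le> P + A" using assms by linarith
  have "P^2 - A^2 = (P - A) * (P + A)" by (simp add: power2_eq_square algebra_simps)
  hence e: "\<bar>P^2 - A^2\<bar> = \<bar>P - A\<bar> * (P + A)" using pa by (simp add: abs_mult)
  have "\<bar>P - A\<bar> * (G/2) \<le> \<bar>P - A\<bar> * (P + A)" using assms by (intro mult_left_mono) auto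
  hence "\<bar>P - A\<bar> * (G/2) \<le> 1" using e assms by linarith
  thus ?thesis using assms by (simp add: field_simps)
qed
lemma divide_le_self: "0 \<le> x \<Longrightarrow> 1 \<le> u \<Longrightarrow> x/u \<le> (x::real)"
  using divide_left_mono[of 1 u x] by simp


lemma Phi_decomp:
  fixes \<rho> \<Gamma> :: real
  assumes r0: "0 < \<rho>" and r1: "\<rho> \<le> 1" and G: "2000 \<le> \<Gamma>"
  shows "\<bar>Phi \<rho> \<Gamma> - (\<Gamma>*\<rho>/(1+\<rho>) - \<rho>*ln \<Gamma> + 2*\<rho>*ln(1+\<rho>) - \<rho> + ln(1+\<rho>))\<bar> \<le> 9/\<Gamma>"
proof -
  define u where "u = 1+\<rho>"
  define c where "c = (\<rho>^2+1)*(\<rho>+1)^2"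
  have u1: "1 < u" "u \<le> 2" using r0 r1 by (auto simp: u_def)
  have c1: "1 \<le> c" and c8: "c \<le> 8" unfolding c_def using c_bounds[OF r0 r1] by auto
  have Gpos: "0 < \<Gamma>" using G by simp
  have GG: "10000 \<le> \<Gamma>^2" using G power_mono[of 2000 \<Gamma> 2] by simp
  have G2: "4*c \<le> \<Gamma>^2" using GG c8 by simp
  define s where "s = sqrt (\<Gamma>^2 - 4*c)"
  have s_le: "s \<le> \<Gamma>" and s_ge: "\<Gamma> - 4*c/\<Gamma> \<le> s"
    unfolding s_def using sqrt_lower[OF Gpos _ G2] c1 by auto
  define t where "t = (\<Gamma>+s)/(2*\<Gamma>)"
  have t_le: "t \<le> 1" using s_le Gpos by (simp add: t_def field_simps)
  have t_ge': "1 - t \<le> 2*c/\<Gamma>^2"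
  proof -
    have "1 - t = (\<Gamma> - s)/(2*\<Gamma>)" using Gpos by (simp add: t_def field_simps)
    also have "\<dots> \<le> (4*c/\<Gamma>)/(2*\<Gamma>)" using s_ge Gpos by (intro divide_right_mono) auto
    also have "\<dots> = 2*c/\<Gamma>^2" using Gpos by (simp add: power2_eq_square field_simps)
    finally show ?thesis .
  qed
  have t_ge: "1 - t \<le> 16/\<Gamma>^2"
  proof -
    have "2*c/\<Gamma>^2 \<le> 16/\<Gamma>^2" using c8 by (intro divide_right_mono) auto
    thus ?thesis using t_ge' by linarith
  qed
  have small: "16/\<Gamma>^2 \<le> 1/(100*\<Gamma>)"
  proof -
    have "16 * (100*\<Gamma>) \<le> \<Gamma>*\<Gamma>" using G mult_right_mono[OF G, of \<Gamma>] Gpos by simp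
    thus ?thesis using Gpos by (simp add: field_simps power2_eq_square)
  qed
  have inv_small: "1/(100*\<Gamma>) \<le> 1/10000" using G by (simp add: field_simps)
  have t_half: "1/2 \<le> t" using t_ge small inv_small by linarith
  have tpos: "0 < t" using t_half by simp
  define \<eta> where "\<eta> = t*\<Gamma>/u^2"
  have tG: "t*\<Gamma> = (\<Gamma>+s)/2" using Gpos by (simp add: t_def field_simps)
  have e1: "eta_fn \<rho> \<Gamma> = (\<Gamma>+s)/(2*u^2)" unfolding eta_fn_def s_def c_def u_def
    by (simp add: mult.assoc add.commute)
  have eta_eq: "eta_fn \<rho> \<Gamma> = \<eta>" unfolding e1 \<eta>_def tG by simp
  have eta_pos: "0 < \<eta>" using tpos Gpos u1 by (simp add: \<eta>_def)
  define A where "A = sqrt (4*\<eta>*\<Gamma>+1)"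
  define P where "P = \<Gamma>*(t+1)/u"
  have A2: "A^2 = 4*t*\<Gamma>^2/u^2 + 1" unfolding A_def \<eta>_def using eta_pos tpos Gpos
    by (simp add: power2_eq_square)
  have Apos: "0 \<le> A" unfolding A_def using eta_pos Gpos by simp
  have Pge: "\<Gamma>/2 \<le> P"
  proof -
    have "\<Gamma>/2 \<le> \<Gamma>*(t+1)/2" using tpos Gpos by (simp add: field_simps)
    also have "\<dots> \<le> \<Gamma>*(t+1)/u" using u1 tpos Gpos by (intro divide_left_mono) auto
    finally show ?thesis unfolding P_def .
  qed
  have PA2: "P^2 - A^2 = \<Gamma>^2*(1-t)^2/u^2 - 1" unfolding P_def A2 using u1
    by (simp add: power2_eq_square field_simps)
  have q0: "0 \<le> \<Gamma>^2*(1-t)^2/u^2" by simp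
  have q1: "\<Gamma>^2*(1-t)^2/u^2 \<le> 1"
  proof -
    have "(1-t)^2 \<le> (16/\<Gamma>^2)^2" using t_ge t_le by (intro power_mono) auto
    hence "\<Gamma>^2*(1-t)^2 \<le> \<Gamma>^2*(16/\<Gamma>^2)^2" by (simp add: mult_left_mono)
    also have "\<dots> = 256/\<Gamma>^2" using Gpos by (simp add: power2_eq_square field_simps)
    also have "\<dots> \<le> 1" using GG by (simp add: divide_le_eq)
    finally have h: "\<Gamma>^2*(1-t)^2 \<le> 1" .
    have "\<Gamma>^2*(1-t)^2/u^2 \<le> \<Gamma>^2*(1-t)^2" using u1 by (intro divide_le_self) auto
    thus ?thesis using h by linarith
  qed
  have PA: "\<bar>P - A\<bar> \<le> 2/\<Gamma>"
    by (rule PA_bound[OF Apos Pge Gpos]) (use PA2 q0 q1 in simp)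
  define y where "y = (A+1)/(2*\<eta>*u)"
  have tGu: "\<Gamma>/2 \<le> 2*t*\<Gamma>/u"
  proof -
    have "\<Gamma>/2 \<le> 2*t*\<Gamma>/2" using t_half Gpos by (simp add: field_simps)
    also have "\<dots> \<le> 2*t*\<Gamma>/u" using u1 tpos Gpos by (intro divide_left_mono) auto
    finally show ?thesis .
  qed
  have eta_u: "2*\<eta>*u = 2*t*\<Gamma>/u" unfolding \<eta>_def using u1 by (simp add: power2_eq_square)
  have y1: "1 \<le> y"
  proof -
    have "(2*t*\<Gamma>/u)^2 = 4*(t*t)*\<Gamma>^2/u^2" by (simp add: power2_eq_square)
    also have "\<dots> \<le> 4*t*\<Gamma>^2/u^2"
    proof -
      have "t*t \<le> t" using tpos t_le by (simp add: mult_left_le)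
      thus ?thesis by (intro divide_right_mono mult_right_mono) auto
    qed
    also have "\<dots> \<le> A^2" unfolding A2 by simp
    finally have "2*t*\<Gamma>/u \<le> A" using Apos tpos Gpos u1 by (simp add: power2_le_iff_abs_le)
    hence "2*\<eta>*u \<le> A+1" unfolding eta_u by simp
    thus ?thesis unfolding y_def using eta_pos u1 by simp
  qed
  have ylog: "ln y \<le> 4/\<Gamma>"
  proof -
    have "ln y \<le> y - 1" using y1 by (intro ln_le_minus_one) simp
    also have "y - 1 = (A + 1 - 2*t*\<Gamma>/u)/(2*t*\<Gamma>/u)" unfolding y_def eta_u using tpos Gpos u1
      by (simp add: field_simps)
    also have "\<dots> \<le> 2/(\<Gamma>/2)"
    proof (rule frac_le)
      have "A \<le> P + 2/\<Gamma>" using PA by simp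
      moreover have "\<Gamma>*(t+1)/u = \<Gamma>*(1-t)/u + 2*t*\<Gamma>/u" using u1 by (simp add: field_simps)
      ultimately have "A + 1 - 2*t*\<Gamma>/u \<le> \<Gamma>*(1-t)/u + 2/\<Gamma> + 1" unfolding P_def by linarith
      moreover have "\<Gamma>*(1-t)/u \<le> \<Gamma>*(1-t)" using u1 t_le Gpos by (intro divide_le_self) auto
      moreover have "\<Gamma>*(1-t) \<le> \<Gamma>*(16/\<Gamma>^2)" using t_ge Gpos by (intro mult_left_mono) auto
      moreover have "\<Gamma>*(16/\<Gamma>^2) = 16/\<Gamma>" using Gpos by (simp add: power2_eq_square)
      moreover have "16/\<Gamma> \<le> 16/100" "2/\<Gamma> \<le> 2/100" using G by (auto simp: field_simps)
      ultimately show "A + 1 - 2*t*\<Gamma>/u \<le> 2" by linarith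
      show "0 \<le> (2::real)" by simp
      show "0 < \<Gamma>/2" using Gpos by simp
      show "\<Gamma>/2 \<le> 2*t*\<Gamma>/u" by (rule tGu)
    qed
    finally show ?thesis by simp
  qed
  have ylog0: "0 \<le> ln y" using y1 by simp
  have tlog0: "0 \<le> - ln t" using t_le tpos by simp
  have tlog: "- ln t \<le> 1/\<Gamma>"
  proof -
    have "ln (1/t) \<le> 1/t - 1" using tpos by (intro ln_le_minus_one) simp
    hence "- ln t \<le> (1 - t)/t" using tpos by (simp add: ln_div diff_divide_distrib)
    also have "\<dots> \<le> (1-t)/(1/2)" using t_half t_le by (intro divide_left_mono) auto
    also have "\<dots> = 2*(1-t)" by simp
    also have "\<dots> \<le> 2*(1/(100*\<Gamma>))" using order_trans[OF t_ge small] by (intro mult_left_mono) auto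
    also have "\<dots> \<le> 1/\<Gamma>" using Gpos by (simp add: field_simps)
    finally show ?thesis .
  qed
  have ident: "Phi \<rho> \<Gamma> = (\<Gamma>*\<rho>/(1+\<rho>) - \<rho>*ln \<Gamma> + 2*\<rho>*ln(1+\<rho>) - \<rho> + ln(1+\<rho>)) + (P - A) - \<rho> * ln t + ln y"
  proof -
    have l1: "ln \<eta> = ln t + ln \<Gamma> - 2 * ln u" unfolding \<eta>_def using tpos Gpos u1
      by (simp add: ln_div ln_mult ln_realpow)
    have l2: "ln ((A+1)/(2*\<eta>)) = ln y + ln u"
    proof -
      have "(A+1)/(2*\<eta>) = y * u" unfolding y_def using u1 eta_pos by simp
      thus ?thesis using y1 u1 by (simp add: ln_mult)
    qed
    have "Phi \<rho> \<Gamma> = \<rho> * (\<eta> - 1 - ln \<eta>) + \<eta> + \<Gamma> + ln ((A + 1) / (2 * \<eta>)) - A"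
      unfolding Phi_def Let_def eta_eq A_def by simp
    also have "\<dots> = (\<rho>+1)*\<eta> + \<Gamma> - A - \<rho> - \<rho> * (ln t + ln \<Gamma> - 2 * ln u) + ln y + ln u"
      unfolding l1 l2 by (simp add: algebra_simps)
    also have "(\<rho>+1)*\<eta> + \<Gamma> = P + \<Gamma>*\<rho>/(1+\<rho>)"
    proof -
      have "(\<rho>+1)*\<eta> = t*\<Gamma>/u" unfolding \<eta>_def u_def by (simp add: power2_eq_square add.commute)
      moreover have "t*\<Gamma>/u + \<Gamma> = P + \<Gamma>*\<rho>/u"
      proof -
        have rho_u: "\<rho> = u - 1" by (simp add: u_def)
        show ?thesis unfolding P_def rho_u using u1 by (simp add: field_simps)
      qed
      ultimately show ?thesis unfolding u_def by simp
    qed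
    finally show ?thesis unfolding u_def by (simp add: algebra_simps)
  qed
  have rt1: "0 \<le> \<rho> * (- ln t)" using r0 tlog0 by (intro mult_nonneg_nonneg) auto
  have rt2: "\<rho> * (- ln t) \<le> 1 * (1/\<Gamma>)" using r0 r1 tlog0 tlog by (intro mult_mono) auto
  note rt = rt1 rt2
  have "\<bar>(P - A) - \<rho> * ln t + ln y\<bar> \<le> 2/\<Gamma> + 1/\<Gamma> + 4/\<Gamma>"
    using PA ylog ylog0 rt by (simp add: abs_le_iff)
  also have "\<dots> \<le> 9/\<Gamma>" using Gpos by (simp add: field_simps)
  finally show ?thesis unfolding ident by simp
qed


lemma quad_bound:
  fixes \<mu> q \<alpha> :: real
  assumes "0 < \<mu>" "1/2 \<le> q" "q \<le> 1" "0 < \<alpha>"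
  shows "2*\<alpha>*q + 4*q * sqrt ((1-q)*q*(1+\<alpha>)) - q^2*(3*\<alpha>+1)
     \<le> (\<mu> - 3*\<alpha> - 1 - 4*(1+\<alpha>)/\<mu>)*q^2 + (2*\<alpha> + 4*(1+\<alpha>)/\<mu>)*q"
proof -
  define x where "x = sqrt ((1-q)*q*(1+\<alpha>))"
  define K where "K = 4*(1+\<alpha>)/\<mu>"
  have x2: "x^2 = (1-q)*q*(1+\<alpha>)" unfolding x_def using assms by simp
  have "0 \<le> (\<mu>*q - 2*x)^2" by simp
  hence "4*\<mu>*q*x \<le> \<mu>^2*q^2 + 4*x^2" by (simp add: power2_eq_square algebra_simps)
  hence "4*q*x \<le> \<mu>*q^2 + 4*x^2/\<mu>" using assms(1)
    by (simp add: field_simps power2_eq_square)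
  hence "4*q*x \<le> \<mu>*q^2 + 4*((1-q)*q*(1+\<alpha>))/\<mu>" unfolding x2 .
  moreover have "4*((1-q)*q*(1+\<alpha>))/\<mu> = (4*(1+\<alpha>)*q - 4*(1+\<alpha>)*q^2)/\<mu>"
    by (simp add: algebra_simps power2_eq_square)
  moreover have "(4*(1+\<alpha>)*q - 4*(1+\<alpha>)*q^2)/\<mu> = K*q - K*q^2"
    unfolding K_def by (simp add: diff_divide_distrib)
  ultimately have h: "4*q*x \<le> \<mu>*q^2 + K*q - K*q^2" by simp
  have r: "(\<mu> - 3*\<alpha> - 1 - K)*q^2 + (2*\<alpha> + K)*q = \<mu>*q^2 - q^2*(3*\<alpha>+1) - K*q^2 + 2*\<alpha>*q + K*q"
    by (simp add: algebra_simps)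
  show ?thesis unfolding x_def[symmetric] K_def[symmetric] r using h by linarith
qed

lemma quad_max:
  fixes a b q :: real assumes "a < 0"
  shows "a*q^2 + b*q \<le> b^2/(-4*a)"
proof -
  have "0 \<le> (2*a*q + b)^2" by simp
  hence "-4*a*(a*q^2 + b*q) \<le> b^2" by (simp add: power2_eq_square algebra_simps)
  hence h: "(a*q^2 + b*q) * (-4*a) \<le> b^2" by (simp add: mult.commute)
  have c: "0 < -4*a" using assms by simp
  show ?thesis using h by (subst pos_le_divide_eq[OF c])
qed

lemma Qbound_core:
  fixes \<alpha> B :: real
  defines "m \<equiv> 15+9*\<alpha>"
  assumes "0 < \<alpha>" "0 < B"
    and key: "10*(2*\<alpha>*m + 40*(1+\<alpha>))^2 < 4*(10*(3*\<alpha>+1)*m - m^2 + 400*(1+\<alpha>))*m*B"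
  shows "m/10 - 3*\<alpha> - 1 - 4*(1+\<alpha>)/(m/10) < 0"
    "(2*\<alpha> + 4*(1+\<alpha>)/(m/10))^2/(-4*(m/10 - 3*\<alpha> - 1 - 4*(1+\<alpha>)/(m/10))) < B"
proof -
  have mpos: "0 < m" unfolding m_def using assms by simp
  define a where "a = m/10 - 3*\<alpha> - 1 - 4*(1+\<alpha>)/(m/10)"
  define b where "b = 2*\<alpha> + 4*(1+\<alpha>)/(m/10)"
  have bmu: "b*m = 2*\<alpha>*m + 40*(1+\<alpha>)" unfolding b_def using mpos by (simp add: field_simps)
  have amu: "-a*m*10 = 10*(3*\<alpha>+1)*m - m^2 + 400*(1+\<alpha>)" unfolding a_def using mpos
    by (simp add: field_simps power2_eq_square)
  have "10*(b*m)^2 < 4*(-a*m*10)*m*B" unfolding bmu amu by (rule key)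
  hence "(b^2) * (10*m^2) < (-4*a*B) * (10*m^2)" by (simp add: power2_eq_square algebra_simps)
  hence lt: "b^2 < -4*a*B" using mult_right_less_imp_less by (metis zero_le_power2 zero_le_mult_iff zero_le_numeral)
  have "0 < -4*a*B" using lt by (smt (verit) zero_le_power2)
  hence neg: "a < 0" using assms(3) by (simp add: zero_less_mult_iff mult_less_0_iff)
  thus "m/10 - 3*\<alpha> - 1 - 4*(1+\<alpha>)/(m/10) < 0" unfolding a_def .
  have c4: "0 < -4*a" using neg by simp
  have "b^2/(-4*a) < B" using lt c4 by (subst pos_divide_less_eq[OF c4]) (simp add: mult.commute)
  thus "(2*\<alpha> + 4*(1+\<alpha>)/(m/10))^2/(-4*(m/10 - 3*\<alpha> - 1 - 4*(1+\<alpha>)/(m/10))) < B"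
    unfolding a_def[symmetric] b_def[symmetric] .
qed

lemma id1: fixes a :: real shows
 "4*(10*(3*a+1)*(15+9*a) - (15+9*a)^2 + 400*(1+a))*(15+9*a)*((1+a)*(1+2*a)) - 10*(2*a*(15+9*a) + 40*(1+a))^2*(1+3*a)
  = 3500 + 6400*a - 1240*a^2 + 1584*a^3 + 12492*a^4 + 3888*a^5"
  by (simp add: eval_nat_numeral algebra_simps)
lemma id2: fixes a :: real shows
 "2*(10*(3*a+1)*(15+9*a) - (15+9*a)^2 + 400*(1+a))*(15+9*a)*(2+a) - 10*(2*a*(15+9*a) + 40*(1+a))^2
  = 3500 + 5650*a - 1990*a^2 - 666*a^3 + 162*a^4"
  by (simp add: eval_nat_numeral algebra_simps)

lemma key1:
  fixes \<alpha> :: real assumes "0 < \<alpha>" "\<alpha> \<le> 1"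
  shows "10*(2*\<alpha>*(15+9*\<alpha>) + 40*(1+\<alpha>))^2 < 4*(10*(3*\<alpha>+1)*(15+9*\<alpha>) - (15+9*\<alpha>)^2 + 400*(1+\<alpha>))*(15+9*\<alpha>)*((1+\<alpha>)*(1+2*\<alpha>)/(1+3*\<alpha>))"
proof -
  have p: "0 < 1+3*\<alpha>" using assms by simp
  have h2: "\<alpha>^2 \<le> \<alpha>" using assms by (simp add: power2_eq_square mult_left_le)
  have "0 \<le> \<alpha>^3" "0 \<le> \<alpha>^4" "0 \<le> \<alpha>^5" using assms by auto
  hence "0 < 3500 + 6400*\<alpha> - 1240*\<alpha>^2 + 1584*\<alpha>^3 + 12492*\<alpha>^4 + 3888*\<alpha>^5" using h2 assms by linarith
  hence "0 < 4*(10*(3*\<alpha>+1)*(15+9*\<alpha>) - (15+9*\<alpha>)^2 + 400*(1+\<alpha>))*(15+9*\<alpha>)*((1+\<alpha>)*(1+2*\<alpha>)) - 10*(2*\<alpha>*(15+9*\<alpha>) + 40*(1+\<alpha>))^2*(1+3*\<alpha>)"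
    unfolding id1 .
  hence "10*(2*\<alpha>*(15+9*\<alpha>) + 40*(1+\<alpha>))^2*(1+3*\<alpha>) < 4*(10*(3*\<alpha>+1)*(15+9*\<alpha>) - (15+9*\<alpha>)^2 + 400*(1+\<alpha>))*(15+9*\<alpha>)*((1+\<alpha>)*(1+2*\<alpha>))"
    by (simp only: diff_gt_0_iff_gt)
  thus ?thesis using p by (simp add: less_divide_eq mult.assoc)
qed

lemma key2:
  fixes \<alpha> :: real assumes "1 \<le> \<alpha>" "\<alpha> \<le> 2"
  shows "10*(2*\<alpha>*(15+9*\<alpha>) + 40*(1+\<alpha>))^2 < 4*(10*(3*\<alpha>+1)*(15+9*\<alpha>) - (15+9*\<alpha>)^2 + 400*(1+\<alpha>))*(15+9*\<alpha>)*((2+\<alpha>)/2)"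
proof -
  have h2: "\<alpha>^2 \<le> 2*\<alpha>" using assms by (simp add: power2_eq_square mult_right_mono)
  have h3: "\<alpha>^3 \<le> 4*\<alpha>"
  proof -
    have "\<alpha>^3 = \<alpha>^2*\<alpha>" by (simp add: power3_eq_cube power2_eq_square)
    also have "\<dots> \<le> 4*\<alpha>" using assms power_mono[of \<alpha> 2 2] by (intro mult_right_mono[of "\<alpha>^2" 4 \<alpha>, simplified]) auto
    finally show ?thesis .
  qed
  have "0 \<le> \<alpha>^4" by simp
  hence "0 < 3500 + 5650*\<alpha> - 1990*\<alpha>^2 - 666*\<alpha>^3 + 162*\<alpha>^4" using h2 h3 assms by linarith
  hence "0 < 2*(10*(3*\<alpha>+1)*(15+9*\<alpha>) - (15+9*\<alpha>)^2 + 400*(1+\<alpha>))*(15+9*\<alpha>)*(2+\<alpha>) - 10*(2*\<alpha>*(15+9*\<alpha>) + 40*(1+\<alpha>))^2"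
    unfolding id2 .
  hence lt: "10*(2*\<alpha>*(15+9*\<alpha>) + 40*(1+\<alpha>))^2 < 2*(10*(3*\<alpha>+1)*(15+9*\<alpha>) - (15+9*\<alpha>)^2 + 400*(1+\<alpha>))*(15+9*\<alpha>)*(2+\<alpha>)"
    by (simp only: diff_gt_0_iff_gt)
  have eq: "\<And>Z W::real. 4*Z*W*((2+\<alpha>)/2) = 2*Z*W*(2+\<alpha>)" by simp
  show ?thesis unfolding eq using lt .
qed


lemma psi_lower:
  fixes \<alpha> B :: real
  assumes "0 < \<alpha>" "0 < B"
    and key: "10*(2*\<alpha>*(15+9*\<alpha>) + 40*(1+\<alpha>))^2 < 4*(10*(3*\<alpha>+1)*(15+9*\<alpha>) - (15+9*\<alpha>)^2 + 400*(1+\<alpha>))*(15+9*\<alpha>)*B"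
  shows "1 + \<alpha> - B < psi \<alpha>"
proof -
  define \<mu> where "\<mu> = (15+9*\<alpha>)/10"
  define a where "a = \<mu> - 3*\<alpha> - 1 - 4*(1+\<alpha>)/\<mu>"
  define b where "b = 2*\<alpha> + 4*(1+\<alpha>)/\<mu>"
  have Q: "a < 0" "b^2/(-4*a) < B"
    using Qbound_core[OF assms(1,2) key] unfolding a_def b_def \<mu>_def by auto
  have mu: "0 < \<mu>" unfolding \<mu>_def using assms by simp
  have hq: "\<And>q. q \<in> {1/2..1} \<Longrightarrow> 2 * \<alpha> * q + 4 * q * sqrt ((1 - q) * q * (1 + \<alpha>)) - q^2 * (3 * \<alpha> + 1) \<le> b^2/(-4*a)"
  proof -
    fix q :: real assume "q \<in> {1/2..1}"
    hence "2 * \<alpha> * q + 4 * q * sqrt ((1 - q) * q * (1 + \<alpha>)) - q^2 * (3 * \<alpha> + 1) \<le> a*q^2 + b*q"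
      using quad_bound[OF mu _ _ assms(1)] unfolding a_def b_def by auto
    also have "\<dots> \<le> b^2/(-4*a)" by (rule quad_max[OF Q(1)])
    finally show "2 * \<alpha> * q + 4 * q * sqrt ((1 - q) * q * (1 + \<alpha>)) - q^2 * (3 * \<alpha> + 1) \<le> b^2/(-4*a)" .
  qed
  have "(SUP q\<in>{1/2..1::real}. 2 * \<alpha> * q + 4 * q * sqrt ((1 - q) * q * (1 + \<alpha>)) - q^2 * (3 * \<alpha> + 1)) \<le> b^2/(-4*a)"
    by (rule cSUP_least) (use hq in auto)
  thus ?thesis unfolding psi_def using Q(2) by linarith
qed

definition fa :: "real \<Rightarrow> real" where "fa a = a^2 - (a - 1) * sqrt (a + 1) - 2"

lemma fa_neg: assumes "0 < a" "a \<le> 1" shows "fa a < 0"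
proof -
  have "sqrt (a+1) \<le> sqrt ((1+a/2)^2)" by (rule real_sqrt_le_mono) (simp add: power2_eq_square algebra_simps)
  hence s: "sqrt (a+1) \<le> 1 + a/2" using assms by simp
  have "(1 - a) * sqrt (a+1) \<le> (1-a)*(1+a/2)" using s assms by (intro mult_left_mono) auto
  hence "fa a \<le> a^2 - 2 + (1-a)*(1+a/2)" unfolding fa_def by (simp add: algebra_simps)
  also have "\<dots> = a^2/2 - a/2 - 1" by (simp add: power2_eq_square field_simps)
  also have "\<dots> < 0"
  proof -
    have "a^2 \<le> a" using assms by (simp add: mult_left_le power2_eq_square)
    thus ?thesis using assms by linarith
  qed
  finally show ?thesis .
qed

lemma fa_mono: assumes "1 \<le> a" "a < b" shows "fa a < fa b"
proof -
  define ua where "ua = sqrt (a+1)"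
  define ub where "ub = sqrt (b+1)"
  have ua1: "1 \<le> ua" unfolding ua_def using assms by simp
  have ub1: "1 \<le> ub" unfolding ub_def using assms by simp
  have ua2: "ua^2 = a+1" unfolding ua_def using assms by simp
  have ub2: "ub^2 = b+1" unfolding ub_def using assms by simp
  have ubb: "ub \<le> (b+2)/2"
  proof -
    have "0 \<le> (ub - 1)^2" by simp
    hence "2*ub \<le> ub^2 + 1" by (simp add: power2_eq_square algebra_simps)
    thus ?thesis using ub2 by simp
  qed
  have diff: "(ub - ua)*(ub + ua) = b - a" using ua2 ub2 by (simp add: power2_eq_square algebra_simps)
  have dle: "ub - ua \<le> (b - a)/2"
  proof -
    have "0 \<le> b - a" using assms by simp
    have "ua \<le> ub" unfolding ua_def ub_def using assms by simp
    hence "0 \<le> ub - ua" by simp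
    hence "(ub - ua)*2 \<le> (ub - ua)*(ub + ua)" using ua1 ub1 by (intro mult_left_mono) auto
    thus ?thesis using diff by simp
  qed
  have "2*((b-1)*ub - (a-1)*ua) = (b-a)*(2*ub) + (a-1)*(2*(ub - ua))" by (simp add: algebra_simps)
  also have "\<dots> \<le> (b-a)*(b+2) + (a-1)*(b-a)"
    using assms ubb dle by (intro add_mono mult_left_mono) auto
  also have "\<dots> = (b-a)*(a+b+1)" by (simp add: algebra_simps)
  also have "\<dots> < 2*((b-a)*(a+b))"
  proof -
    have "0 < (b-a)*(a+b-1)" using assms by (intro mult_pos_pos) auto
    moreover have "(b-a)*(a+b+1) = 2*((b-a)*(a+b)) - (b-a)*(a+b-1)" by (simp add: algebra_simps)
    ultimately show ?thesis by linarith
  qed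
  finally have "(b-1)*ub - (a-1)*ua < (b-a)*(a+b)" by simp
  moreover have "(b-a)*(a+b) = b^2 - a^2" by (simp add: power2_eq_square algebra_simps)
  ultimately show ?thesis unfolding fa_def ua_def[symmetric] ub_def[symmetric] by linarith
qed

lemma alpha0_props: "0 < alpha0 \<and> fa alpha0 = 0"
proof -
  have cont: "continuous_on {1..2} fa" unfolding fa_def by (intro continuous_intros)
  have f1: "fa 1 \<le> 0" unfolding fa_def by simp
  have f2: "0 \<le> fa 2"
  proof -
    have "sqrt 3 \<le> sqrt 4" by (rule real_sqrt_le_mono) simp
    hence "sqrt 3 \<le> 2" by simp
    thus ?thesis unfolding fa_def by simp
  qed
  obtain x where x: "1 \<le> x" "x \<le> 2" "fa x = 0" using IVT'[of fa 1 0 2, OF f1 f2 _ cont] by auto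
  have uniq: "\<And>y. 0 < y \<Longrightarrow> fa y = 0 \<Longrightarrow> y = x"
  proof -
    fix y assume y: "0 < y" "fa y = 0"
    have "1 < y" using y fa_neg by force
    show "y = x"
    proof (rule ccontr)
      assume "y \<noteq> x"
      hence "y < x \<or> x < y" by auto
      thus False using fa_mono[of y x] fa_mono[of x y] x y \<open>1 < y\<close> by auto
    qed
  qed
  have ex: "\<exists>!a. 0 < a \<and> a^2 - (a - 1) * sqrt (a + 1) - 2 = 0"
    using x uniq unfolding fa_def by (intro ex1I[of _ x]) auto
  from theI'[OF ex] show ?thesis unfolding alpha0_def fa_def by simp
qed

lemma alpha0_gt1: "1 < alpha0"
  using alpha0_props fa_neg by force

lemma frac_cmp: fixes x y D E :: real assumes "0 < D" "0 < E" "x*E \<le> y*D" shows "x/D \<le> y/E"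
  using assms by (simp add: field_simps)
lemma frac_cmp_strict: fixes x y D E :: real assumes "0 < D" "0 < E" "x*E < y*D" shows "x/D < y/E"
  using assms by (simp add: field_simps)

definition That :: "real \<Rightarrow> real" where
  "That \<alpha> = (if \<alpha> \<le> 1 then \<alpha>/(1+3*\<alpha>) else \<alpha>/(2*(1+\<alpha>)))"

lemma T_bound:
  fixes \<alpha> \<rho> :: real
  assumes "0 < \<alpha>" "0 < \<rho>" "\<rho> \<le> 1"
  shows "\<alpha>*\<rho>/((1+\<rho>)*(\<rho>+\<alpha>)) \<le> That \<alpha>"
proof (cases "\<alpha> \<le> 1")
  case True
  have "\<rho>*(1+3*\<alpha>) \<le> (1+\<rho>)*(\<rho>+\<alpha>)"
  proof -
    have "0 \<le> (\<rho>-\<alpha>)^2 + \<alpha>*(1-\<alpha>)" using True assms by simp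
    thus ?thesis by (simp add: power2_eq_square algebra_simps)
  qed
  hence "\<alpha>*\<rho>*(1+3*\<alpha>) \<le> \<alpha>*((1+\<rho>)*(\<rho>+\<alpha>))" using assms by (simp add: mult_left_mono mult.assoc)
  moreover have "0 < (1+\<rho>)*(\<rho>+\<alpha>)" "0 < 1+3*\<alpha>" using assms by auto
  ultimately have "\<alpha>*\<rho>/((1+\<rho>)*(\<rho>+\<alpha>)) \<le> \<alpha>/(1+3*\<alpha>)" by (intro frac_cmp) (auto simp: algebra_simps)
  thus ?thesis unfolding That_def using True by simp
next
  case False
  have "\<rho>*(2*(1+\<alpha>)) \<le> (1+\<rho>)*(\<rho>+\<alpha>)"
  proof -
    have "0 \<le> (1-\<rho>)*(\<alpha>-\<rho>)" using False assms by simp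
    thus ?thesis by (simp add: algebra_simps)
  qed
  hence "\<alpha>*\<rho>*(2*(1+\<alpha>)) \<le> \<alpha>*((1+\<rho>)*(\<rho>+\<alpha>))" using assms by (simp add: mult_left_mono mult.assoc)
  moreover have "0 < (1+\<rho>)*(\<rho>+\<alpha>)" "0 < 2*(1+\<alpha>)" using assms by auto
  ultimately have "\<alpha>*\<rho>/((1+\<rho>)*(\<rho>+\<alpha>)) \<le> \<alpha>/(2*(1+\<alpha>))" by (intro frac_cmp) (auto simp: algebra_simps)
  thus ?thesis unfolding That_def using False by simp
qed

lemma gamma_bar_gt:
  fixes \<alpha> :: real assumes "0 < \<alpha>" "\<alpha> < 2"
  shows "That \<alpha> < gamma_bar \<alpha>"
proof (cases "\<alpha> \<le> alpha0")
  case True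
  have m1: "That \<alpha> < \<alpha>/(1+\<alpha>)"
  proof -
    have p: "0 < 1+\<alpha>" "0 < 1+3*\<alpha>" "0 < 2*(1+\<alpha>)" using assms by auto
    have "\<alpha>*(1+\<alpha>) < \<alpha>*(1+3*\<alpha>)" "\<alpha>*(1+\<alpha>) < \<alpha>*(2*(1+\<alpha>))" using assms by auto
    thus ?thesis unfolding That_def using frac_cmp_strict[OF p(2) p(1)] frac_cmp_strict[OF p(3) p(1)] by auto
  qed
  have m2: "That \<alpha> < psi \<alpha> / (1+\<alpha>)"
  proof (cases "\<alpha> \<le> 1")
    case True
    have "1 + \<alpha> - (1+\<alpha>)*(1+2*\<alpha>)/(1+3*\<alpha>) < psi \<alpha>"
      by (rule psi_lower) (use assms True key1[of \<alpha>] in auto)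
    moreover have "1 + \<alpha> - (1+\<alpha>)*(1+2*\<alpha>)/(1+3*\<alpha>) = (1+\<alpha>) * (\<alpha>/(1+3*\<alpha>))"
      using assms by (simp add: field_simps)
    ultimately have "(1+\<alpha>) * That \<alpha> < psi \<alpha>" unfolding That_def using True by simp
    thus ?thesis using assms by (simp add: pos_less_divide_eq mult.commute)
  next
    case False
    have "1 + \<alpha> - (2+\<alpha>)/2 < psi \<alpha>"
      by (rule psi_lower) (use assms False key2[of \<alpha>] in auto)
    moreover have "1 + \<alpha> - (2+\<alpha>)/2 = (1+\<alpha>) * (\<alpha>/(2*(1+\<alpha>)))"
      using assms by (simp add: field_simps)
    ultimately have "(1+\<alpha>) * That \<alpha> < psi \<alpha>" unfolding That_def using False by simp
    thus ?thesis using assms by (simp add: pos_less_divide_eq mult.commute)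
  qed
  show ?thesis unfolding gamma_bar_def using True m1 m2 assms
    by (auto simp: min_def field_simps)
next
  case False
  hence a1: "1 < \<alpha>" using alpha0_gt1 by simp
  have P: "0 < (\<alpha> + 5 - 4 * sqrt (\<alpha> + 1)) / (3 * \<alpha> + 1)"
  proof -
    have "sqrt (\<alpha>+1) < sqrt (((\<alpha>+5)/4)^2)"
    proof (rule real_sqrt_less_mono)
      have "0 < (\<alpha>-3)^2" using assms by simp
      thus "\<alpha>+1 < ((\<alpha>+5)/4)^2" by (simp add: power2_eq_square field_simps)
    qed
    hence "sqrt (\<alpha>+1) < (\<alpha>+5)/4" using assms by simp
    thus ?thesis using assms by simp
  qed
  have "\<alpha> / (2 * (1 + \<alpha>)) < \<alpha> / (2 * (1 + \<alpha>)) * (1 + (\<alpha> + 5 - 4 * sqrt (\<alpha> + 1)) / (3 * \<alpha> + 1))"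
  proof -
    have x: "0 < \<alpha> / (2 * (1 + \<alpha>))" using assms by simp
    have "1 < 1 + (\<alpha> + 5 - 4 * sqrt (\<alpha> + 1)) / (3 * \<alpha> + 1)" using P by simp
    from mult_strict_left_mono[OF this x] show ?thesis by simp
  qed
  thus ?thesis unfolding gamma_bar_def That_def using False a1 assms by auto
qed


lemma Phi_upper: "0 < \<rho> \<Longrightarrow> \<rho> \<le> 1 \<Longrightarrow> 2000 \<le> \<Gamma> \<Longrightarrow>
  Phi \<rho> \<Gamma> \<le> \<Gamma>*\<rho>/(1+\<rho>) - \<rho>*ln \<Gamma> + 2*\<rho>*ln(1+\<rho>) - \<rho> + ln(1+\<rho>) + 9/\<Gamma>"
  using Phi_decomp[of \<rho> \<Gamma>] by (simp add: abs_le_iff)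
lemma Phi_lower: "0 < \<rho> \<Longrightarrow> \<rho> \<le> 1 \<Longrightarrow> 2000 \<le> \<Gamma> \<Longrightarrow>
  \<Gamma>*\<rho>/(1+\<rho>) - \<rho>*ln \<Gamma> + 2*\<rho>*ln(1+\<rho>) - \<rho> + ln(1+\<rho>) - 9/\<Gamma> \<le> Phi \<rho> \<Gamma>"
  using Phi_decomp[of \<rho> \<Gamma>] by (simp add: abs_le_iff)

lemma val_upper3:
  fixes g \<rho> \<Gamma> :: real
  assumes g: "1/3 \<le> g" and r0: "0 < \<rho>" and r1: "\<rho> \<le> 1" and G: "2000 \<le> \<Gamma>"
  shows "(Phi \<rho> \<Gamma> - g*\<Gamma>)/\<rho> \<le> \<Gamma>*(1/2-g) - ln \<Gamma> + 3*ln 2 - 1 + 18/\<Gamma>"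
proof -
  have Gpos: "0 < \<Gamma>" using G by simp
  define l2 where "l2 = ln (2::real)"
  define L where "L = ln (1+\<rho>)"
  define w where "w = 1 - \<rho>"
  have w0: "0 \<le> w" using r1 by (simp add: w_def)
  have l21: "l2 \<le> 1" unfolding l2_def using ln_2_less_1 by simp
  have L0: "0 \<le> L" unfolding L_def using r0 by simp
  have L2: "L \<le> l2" unfolding L_def l2_def using r0 r1 by simp
  have hPhi: "Phi \<rho> \<Gamma> \<le> \<Gamma>*\<rho>/(1+\<rho>) - \<rho>*ln \<Gamma> + 2*\<rho>*L - \<rho> + L + 9/\<Gamma>"
    unfolding L_def by (rule Phi_upper[OF r0 r1 G])
  have hA: "\<Gamma>*\<rho>/(1+\<rho>) \<le> \<rho>*\<Gamma>/2 + \<Gamma>*w/4"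
  proof -
    have "0 \<le> (\<rho>-1)*(\<rho>-1)" by simp
    moreover have "(1+\<rho>)^2 - 4*\<rho> = (\<rho>-1)*(\<rho>-1)" by (simp add: power2_eq_square algebra_simps)
    ultimately have "4*\<rho> \<le> (1+\<rho>)^2" by linarith
    hence "\<Gamma>*(4*\<rho>) \<le> \<Gamma>*(1+\<rho>)^2" using Gpos by (intro mult_left_mono) auto
    moreover have "\<Gamma>*(1+\<rho>)^2 = (\<rho>*\<Gamma>/2 + \<Gamma>*w/4) * (4*(1+\<rho>))" unfolding w_def by (simp add: power2_eq_square field_simps)
    ultimately have "\<Gamma>*\<rho> * 4 \<le> (\<rho>*\<Gamma>/2 + \<Gamma>*w/4) * (4*(1+\<rho>))" by (simp add: mult.commute mult.left_commute)
    moreover have "\<And>Z::real. Z * (4*(1+\<rho>)) = (Z*(1+\<rho>))*4" by simp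
    ultimately have "\<Gamma>*\<rho> * 4 \<le> ((\<rho>*\<Gamma>/2 + \<Gamma>*w/4) * (1+\<rho>)) * 4" by metis
    hence "\<Gamma>*\<rho> \<le> (\<rho>*\<Gamma>/2 + \<Gamma>*w/4) * (1+\<rho>)" by (rule mult_right_le_imp_le) simp
    thus ?thesis using r0 by (simp add: pos_divide_le_eq)
  qed
  have hL: "2*\<rho>*L + L \<le> (2*\<rho>+1)*l2" using L2 r0 mult_left_mono[OF L2, of "2*\<rho>+1"] by (simp add: algebra_simps)
  have hg: "\<Gamma>*w/3 \<le> g*\<Gamma>*w" using g Gpos w0 mult_right_mono[OF g, of "\<Gamma>*w"] by (simp add: mult.assoc)
  have h18: "9/\<Gamma> - 18*\<rho>/\<Gamma> \<le> 18*w/\<Gamma>" unfolding w_def using Gpos by (simp add: field_simps)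
  have brk: "\<Gamma>/4 - \<Gamma>/3 + l2 + 18/\<Gamma> \<le> 0"
  proof -
    have "18/\<Gamma> \<le> 1" using G by simp
    thus ?thesis using G l21 by linarith
  qed
  have hw: "w*(\<Gamma>/4 - \<Gamma>/3 + l2 + 18/\<Gamma>) \<le> 0" using w0 brk by (simp add: mult_nonneg_nonpos)
  have hw': "w*(\<Gamma>/4 - \<Gamma>/3 + l2 + 18/\<Gamma>) = \<Gamma>*w/4 - \<Gamma>*w/3 + w*l2 + 18*w/\<Gamma>" using Gpos by (simp add: field_simps)
  have e1: "(2*\<rho>+1)*l2 = 3*\<rho>*l2 + w*l2" unfolding w_def by (simp add: algebra_simps)
  have e2: "g*\<Gamma> = \<rho>*(g*\<Gamma>) + g*\<Gamma>*w" unfolding w_def by (simp add: algebra_simps)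
  have "Phi \<rho> \<Gamma> - g*\<Gamma> \<le> (\<Gamma>*(1/2-g) - ln \<Gamma> + 3*ln 2 - 1 + 18/\<Gamma>) * \<rho>"
  proof -
    have rhs: "(\<Gamma>*(1/2-g) - ln \<Gamma> + 3*ln 2 - 1 + 18/\<Gamma>) * \<rho> = \<rho>*\<Gamma>/2 - \<rho>*(g*\<Gamma>) - \<rho>*ln \<Gamma> + 3*\<rho>*l2 - \<rho> + 18*\<rho>/\<Gamma>"
      unfolding l2_def using Gpos by (simp add: field_simps)
    show ?thesis unfolding rhs using hPhi hA hL hg h18 hw hw' e1 e2 by linarith
  qed
  thus ?thesis using r0 by (simp add: pos_divide_le_eq)
qed

lemma Lambda3:
  fixes g \<Gamma> :: real
  assumes g: "1/3 \<le> g" and G: "2000 \<le> \<Gamma>"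
  shows "\<bar>Lambda g \<Gamma> - (\<Gamma>*(1/2-g) - ln \<Gamma> + 3*ln 2 - 1)\<bar> \<le> 18/\<Gamma>"
proof -
  have ub: "\<And>\<rho>. \<rho> \<in> {0<..1} \<Longrightarrow> (Phi \<rho> \<Gamma> - g*\<Gamma>)/\<rho> \<le> \<Gamma>*(1/2-g) - ln \<Gamma> + 3*ln 2 - 1 + 18/\<Gamma>"
    using val_upper3[OF g _ _ G] by auto
  have up: "Lambda g \<Gamma> \<le> \<Gamma>*(1/2-g) - ln \<Gamma> + 3*ln 2 - 1 + 18/\<Gamma>"
    unfolding Lambda_def by (rule cSUP_least) (use ub in auto)
  have bdd: "bdd_above ((\<lambda>\<rho>. (Phi \<rho> \<Gamma> - g*\<Gamma>)/\<rho>) ` {0<..1})"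
    using ub by (intro bdd_aboveI2) auto
  have "(Phi 1 \<Gamma> - g*\<Gamma>)/1 \<le> Lambda g \<Gamma>"
    unfolding Lambda_def by (rule cSUP_upper[OF _ bdd]) auto
  moreover have "\<Gamma>*1/(1+1) - 1*ln \<Gamma> + 2*1*ln(1+1) - 1 + ln(1+1) - 9/\<Gamma> \<le> Phi 1 \<Gamma>"
    by (rule Phi_lower) (use G in auto)
  ultimately have lo: "\<Gamma>*(1/2-g) - ln \<Gamma> + 3*ln 2 - 1 - 9/\<Gamma> \<le> Lambda g \<Gamma>" by (simp add: algebra_simps)
  have "0 < \<Gamma>" using G by simp
  hence "9/\<Gamma> \<le> 18/\<Gamma>" by (simp add: divide_right_mono)
  thus ?thesis using up lo by (simp add: abs_le_iff)
qed


definition fg :: "real \<Rightarrow> real \<Rightarrow> real" where "fg g \<rho> = 1/(1+\<rho>) - g/\<rho>"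

lemma e1_aux: fixes G r g :: real assumes "0 < r" "0 < G"
  shows "(G * (1/(1+r) - g/r) + 2 + 9/(G*r)) * r = G*r/(1+r) - g*G + 2*r + 9/G"
proof -
  have "(G * (1/(1+r) - g/r) + 2 + 9/(G*r)) * r = G*r/(1+r) - G*(g/r*r) + 2*r + 9/(G*r)*r"
    by (simp add: algebra_simps)
  also have "g/r*r = g" using assms by simp
  also have "9/(G*r)*r = 9/G" using assms by simp
  finally show ?thesis by (simp add: mult.commute)
qed
lemma e2_aux: fixes G r g L :: real assumes "0 < r" "0 < G"
  shows "(G * (1/(1+r) - g/r) - L - 1 - 9/(G*r)) * r = G*r/(1+r) - r*L - r - 9/G - g*G"
proof -
  have "(G * (1/(1+r) - g/r) - L - 1 - 9/(G*r)) * r = G*r/(1+r) - G*(g/r*r) - r*L - r - 9/(G*r)*r"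
    by (simp add: algebra_simps)
  also have "g/r*r = g" using assms by simp
  also have "9/(G*r)*r = 9/G" using assms by simp
  finally show ?thesis by (simp add: mult.commute)
qed

lemma val_upper_gen:
  fixes g \<rho> \<Gamma> :: real
  assumes r0: "0 < \<rho>" and r1: "\<rho> \<le> 1" and G: "2000 \<le> \<Gamma>"
  shows "(Phi \<rho> \<Gamma> - g*\<Gamma>)/\<rho> \<le> \<Gamma> * fg g \<rho> + 2 + 9/(\<Gamma>*\<rho>)"
proof -
  have Gpos: "0 < \<Gamma>" using G by simp
  have lnG: "0 \<le> ln \<Gamma>" using G by simp
  have L1: "ln (1+\<rho>) \<le> \<rho>" using r0 by (intro ln_add_one_self_le_self) simp
  have L0: "0 \<le> ln (1+\<rho>)" using r0 by simp
  have "2*\<rho>*ln(1+\<rho>) \<le> 2*\<rho>*1" using L1 r0 r1 by (intro mult_left_mono) auto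
  moreover have "\<rho>*ln \<Gamma> \<ge> 0" using r0 lnG by simp
  moreover note Phi_upper[OF r0 r1 G]
  ultimately have "Phi \<rho> \<Gamma> - g*\<Gamma> \<le> \<Gamma>*\<rho>/(1+\<rho>) + 2*\<rho> + 9/\<Gamma> - g*\<Gamma>" using L1 by linarith
  also have "\<dots> = (\<Gamma> * fg g \<rho> + 2 + 9/(\<Gamma>*\<rho>)) * \<rho>"
  proof -
    have n: "1+\<rho> \<noteq> 0" "\<rho> \<noteq> 0" "\<Gamma> \<noteq> 0" using r0 Gpos by auto
    show ?thesis unfolding fg_def using e1_aux[OF r0 Gpos, of g] by simp
  qed
  finally show ?thesis using r0 by (simp add: pos_divide_le_eq)
qed

lemma val_lower_gen:
  fixes g \<rho> \<Gamma> :: real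
  assumes r0: "0 < \<rho>" and r1: "\<rho> \<le> 1" and G: "2000 \<le> \<Gamma>"
  shows "\<Gamma> * fg g \<rho> - ln \<Gamma> - 1 - 9/(\<Gamma>*\<rho>) \<le> (Phi \<rho> \<Gamma> - g*\<Gamma>)/\<rho>"
proof -
  have Gpos: "0 < \<Gamma>" using G by simp
  have L0: "0 \<le> ln (1+\<rho>)" using r0 by simp
  have "0 \<le> 2*\<rho>*ln(1+\<rho>)" using L0 r0 by simp
  with Phi_lower[OF r0 r1 G] L0 have "\<Gamma>*\<rho>/(1+\<rho>) - \<rho>*ln \<Gamma> - \<rho> - 9/\<Gamma> - g*\<Gamma> \<le> Phi \<rho> \<Gamma> - g*\<Gamma>" by linarith
  moreover have "\<Gamma>*\<rho>/(1+\<rho>) - \<rho>*ln \<Gamma> - \<rho> - 9/\<Gamma> - g*\<Gamma> = (\<Gamma> * fg g \<rho> - ln \<Gamma> - 1 - 9/(\<Gamma>*\<rho>)) * \<rho>"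
  proof -
    have n: "1+\<rho> \<noteq> 0" "\<rho> \<noteq> 0" "\<Gamma> \<noteq> 0" using r0 Gpos by auto
    show ?thesis unfolding fg_def using e2_aux[OF r0 Gpos, of g "ln \<Gamma>"] by simp
  qed
  ultimately show ?thesis using r0 by (simp add: pos_le_divide_eq)
qed

lemma fg_le1: "0 < g \<Longrightarrow> 0 < \<rho> \<Longrightarrow> fg g \<rho> \<le> 1"
proof -
  assume a: "0 < g" "0 < \<rho>"
  have "1/(1+\<rho>) \<le> 1" using a by simp
  moreover have "0 \<le> g/\<rho>" using a by simp
  ultimately show ?thesis unfolding fg_def by linarith
qed

lemma bdd_fg: "0 < g \<Longrightarrow> bdd_above (fg g ` {0<..1})"
  using fg_le1 by (intro bdd_aboveI2[of _ _ 1]) auto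

lemma val_small:
  fixes g \<rho> \<Gamma> :: real
  assumes g: "0 < g" and r0: "0 < \<rho>" and r1: "\<rho> \<le> 1" and G: "2000 \<le> \<Gamma>" and Gg: "18 \<le> g*\<Gamma>^2"
  shows "(Phi \<rho> \<Gamma> - g*\<Gamma>)/\<rho> \<le> \<Gamma> + 2 - g*\<Gamma>/(2*\<rho>)"
proof -
  have Gpos: "0 < \<Gamma>" using G by simp
  have "9/(\<Gamma>*\<rho>) \<le> g*\<Gamma>/(2*\<rho>)"
  proof -
    have "9 * (2*\<rho>) \<le> g*\<Gamma>*(\<Gamma>*\<rho>)" using Gg r0
      by (simp add: power2_eq_square)
    thus ?thesis using r0 Gpos by (simp add: frac_cmp)
  qed
  moreover have "\<Gamma> * fg g \<rho> \<le> \<Gamma> - g*\<Gamma>/\<rho>"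
  proof -
    have "\<Gamma>/(1+\<rho>) \<le> \<Gamma>" using r0 Gpos by (simp add: divide_le_self)
    moreover have "\<Gamma> * fg g \<rho> = \<Gamma>/(1+\<rho>) - g*\<Gamma>/\<rho>" unfolding fg_def by (simp add: right_diff_distrib mult.commute)
    ultimately show ?thesis by linarith
  qed
  moreover have "g*\<Gamma>/\<rho> = 2*(g*\<Gamma>/(2*\<rho>))" by simp
  ultimately show ?thesis using val_upper_gen[OF r0 r1 G, of g] by linarith
qed

lemma Lambda_bdd:
  fixes g \<Gamma> :: real
  assumes g: "0 < g" and G: "2000 \<le> \<Gamma>" and Gg: "18 \<le> g*\<Gamma>^2"
  shows "bdd_above ((\<lambda>\<rho>. (Phi \<rho> \<Gamma> - g*\<Gamma>)/\<rho>) ` {0<..1})"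
proof (rule bdd_aboveI2[of _ _ "\<Gamma> + 2"])
  fix \<rho> :: real assume "\<rho> \<in> {0<..1}"
  hence r: "0 < \<rho>" "\<rho> \<le> 1" by auto
  have "0 \<le> g*\<Gamma>/(2*\<rho>)" using g G r by simp
  thus "(Phi \<rho> \<Gamma> - g*\<Gamma>)/\<rho> \<le> \<Gamma> + 2" using val_small[OF g r G Gg] by linarith
qed

lemma Lambda_upper_gen:
  fixes g \<Gamma> :: real
  defines "M \<equiv> (SUP \<rho>\<in>{0<..1}. fg g \<rho>)"
  assumes g: "0 < g" and G: "2000 \<le> \<Gamma>" and Gg: "18 \<le> g*\<Gamma>^2" and Gg2: "1 + 2*g \<le> g*\<Gamma>"
  shows "Lambda g \<Gamma> \<le> \<Gamma>*M + 11"
  unfolding Lambda_def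
proof (rule cSUP_least)
  show "{0<..1::real} \<noteq> {}" by auto
  fix \<rho> :: real assume "\<rho> \<in> {0<..1}"
  hence r: "0 < \<rho>" "\<rho> \<le> 1" by auto
  have Gpos: "0 < \<Gamma>" using G by simp
  have M1: "fg g 1 \<le> M" unfolding M_def by (rule cSUP_upper[OF _ bdd_fg[OF g]]) auto
  show "(Phi \<rho> \<Gamma> - g*\<Gamma>)/\<rho> \<le> \<Gamma>*M + 11"
  proof (cases "1/\<Gamma> \<le> \<rho>")
    case True
    have "fg g \<rho> \<le> M" unfolding M_def by (rule cSUP_upper[OF _ bdd_fg[OF g]]) (use r in auto)
    hence a: "\<Gamma> * fg g \<rho> \<le> \<Gamma>*M" using Gpos by simp
    have "9/(\<Gamma>*\<rho>) \<le> 9"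
    proof -
      have "1 \<le> \<Gamma>*\<rho>" using True Gpos by (simp add: divide_le_eq mult.commute)
      thus ?thesis by (simp add: divide_le_eq)
    qed
    thus ?thesis using val_upper_gen[OF r G, of g] a by linarith
  next
    case False
    hence "\<rho>*\<Gamma> < 1" using Gpos by (simp add: field_simps)
    hence "g*\<Gamma>*(\<rho>*\<Gamma>) \<le> g*\<Gamma>*1" using g Gpos by (intro mult_left_mono) auto
    hence "g*\<Gamma>^2 * \<rho> \<le> g*\<Gamma>" by (simp add: power2_eq_square mult_ac)
    hence "g*\<Gamma>^2/2 \<le> g*\<Gamma>/(2*\<rho>)" using r by (simp add: field_simps)
    moreover have "g*\<Gamma>^2/2 \<ge> \<Gamma>/2 + g*\<Gamma>"
    proof -
      have "(1 + 2*g)*\<Gamma> \<le> g*\<Gamma>*\<Gamma>" using Gg2 Gpos by (intro mult_right_mono) auto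
      thus ?thesis by (simp add: power2_eq_square algebra_simps)
    qed
    moreover have "\<Gamma>*(1/2 - g) \<le> \<Gamma>*M" using M1 Gpos unfolding fg_def by (intro mult_left_mono) auto
    ultimately show ?thesis using val_small[OF g r G Gg] by (simp add: algebra_simps)
  qed
qed

lemma Lambda_lower_gen:
  fixes g \<Gamma> \<rho> :: real
  assumes g: "0 < g" and G: "2000 \<le> \<Gamma>" and Gg: "18 \<le> g*\<Gamma>^2" and r: "0 < \<rho>" "\<rho> \<le> 1"
  shows "\<Gamma> * fg g \<rho> - ln \<Gamma> - 1 - 9/(\<Gamma>*\<rho>) \<le> Lambda g \<Gamma>"
proof -
  have "(Phi \<rho> \<Gamma> - g*\<Gamma>)/\<rho> \<le> Lambda g \<Gamma>"
    unfolding Lambda_def by (rule cSUP_upper[OF _ Lambda_bdd[OF g G Gg]]) (use r in auto)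
  thus ?thesis using val_lower_gen[OF r G, of g] by linarith
qed

lemma lin_aux: fixes p q r s u :: real shows "p - q \<le> r \<Longrightarrow> q < (s-u)/2 \<Longrightarrow> (u+s)/2 < p \<Longrightarrow> u < r" by (simp add: field_simps)

lemma Lambda_lim:
  fixes g :: real
  assumes g: "0 < g"
  shows "((\<lambda>\<Gamma>. Lambda g \<Gamma> / \<Gamma>) \<longlongrightarrow> (SUP \<rho>\<in>{0<..1}. fg g \<rho>)) at_top"
proof (rule order_tendstoI)
  define M where "M = (SUP \<rho>\<in>{0<..1}. fg g \<rho>)"
  have ev: "eventually (\<lambda>\<Gamma>. 2000 \<le> \<Gamma> \<and> 18 \<le> g*\<Gamma>^2 \<and> 1 + 2*g \<le> g*\<Gamma>) at_top"
  proof -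
    have "eventually (\<lambda>\<Gamma>::real. 2000 \<le> \<Gamma>) at_top" by (rule eventually_ge_at_top)
    moreover have "eventually (\<lambda>\<Gamma>::real. 18 \<le> g*\<Gamma>^2) at_top" using g by real_asymp
    moreover have "eventually (\<lambda>\<Gamma>::real. 1 + 2*g \<le> g*\<Gamma>) at_top" using g by real_asymp
    ultimately show ?thesis by eventually_elim auto
  qed
  fix a assume "a < (SUP \<rho>\<in>{0<..1}. fg g \<rho>)"
  hence aM: "a < M" unfolding M_def .
  hence "(a+M)/2 < M" by simp
  hence "\<exists>\<rho>\<in>{0<..1}. (a+M)/2 < fg g \<rho>"
    unfolding M_def by (subst (asm) less_cSUP_iff[OF _ bdd_fg[OF g]]) auto
  then obtain \<rho> where r: "\<rho> \<in> {0<..1}" "(a+M)/2 < fg g \<rho>" by blast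
  have r0: "0 < \<rho>" "\<rho> \<le> 1" using r by auto
  define X where "X = (\<lambda>\<Gamma>. (ln \<Gamma> + 1 + 9/(\<Gamma>*\<rho>))/\<Gamma>)"
  have lim0: "(X \<longlongrightarrow> 0) at_top" unfolding X_def using r0 by real_asymp
  have "(M - a)/2 > 0" using aM by simp
  from order_tendstoD(2)[OF lim0 this]
  have ev2: "eventually (\<lambda>\<Gamma>. X \<Gamma> < (M-a)/2) at_top" .
  show "eventually (\<lambda>\<Gamma>. a < Lambda g \<Gamma> / \<Gamma>) at_top"
    using ev ev2
  proof eventually_elim
    case (elim \<Gamma>)
    have Gpos: "0 < \<Gamma>" using elim by simp
    have lo: "\<Gamma> * fg g \<rho> - ln \<Gamma> - 1 - 9/(\<Gamma>*\<rho>) \<le> Lambda g \<Gamma>"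
      using Lambda_lower_gen[OF g _ _ r0] elim by auto
    have "fg g \<rho> - X \<Gamma> \<le> Lambda g \<Gamma> / \<Gamma>"
    proof -
      have "(\<Gamma> * fg g \<rho> - ln \<Gamma> - 1 - 9/(\<Gamma>*\<rho>))/\<Gamma> \<le> Lambda g \<Gamma> / \<Gamma>"
        using lo Gpos by (simp add: divide_right_mono)
      moreover have "(\<Gamma> * fg g \<rho> - ln \<Gamma> - 1 - 9/(\<Gamma>*\<rho>))/\<Gamma> = fg g \<rho> - (ln \<Gamma> + 1 + 9/(\<Gamma>*\<rho>))/\<Gamma>"
        using Gpos by (simp add: field_simps)
      ultimately show ?thesis by (simp add: X_def)
    qed
    from lin_aux[OF this elim(2) r(2)] show ?case .
  qed
next
  fix a assume "(SUP \<rho>\<in>{0<..1}. fg g \<rho>) < a"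
  define M where "M = (SUP \<rho>\<in>{0<..1}. fg g \<rho>)"
  have aM: "M < a" using \<open>(SUP \<rho>\<in>{0<..1}. fg g \<rho>) < a\<close> unfolding M_def .
  have ev: "eventually (\<lambda>\<Gamma>. 2000 \<le> \<Gamma> \<and> 18 \<le> g*\<Gamma>^2 \<and> 1 + 2*g \<le> g*\<Gamma>) at_top"
  proof -
    have "eventually (\<lambda>\<Gamma>::real. 2000 \<le> \<Gamma>) at_top" by (rule eventually_ge_at_top)
    moreover have "eventually (\<lambda>\<Gamma>::real. 18 \<le> g*\<Gamma>^2) at_top" using g by real_asymp
    moreover have "eventually (\<lambda>\<Gamma>::real. 1 + 2*g \<le> g*\<Gamma>) at_top" using g by real_asymp
    ultimately show ?thesis by eventually_elim auto
  qed
  have lim0: "((\<lambda>\<Gamma>::real. 11/\<Gamma>) \<longlongrightarrow> 0) at_top" by real_asymp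
  from order_tendstoD(2)[OF lim0, of "a - M"] aM
  have ev2: "eventually (\<lambda>\<Gamma>. 11/\<Gamma> < a - M) at_top" by simp
  show "eventually (\<lambda>\<Gamma>. Lambda g \<Gamma> / \<Gamma> < a) at_top"
    using ev ev2
  proof eventually_elim
    case (elim \<Gamma>)
    have Gpos: "0 < \<Gamma>" using elim by simp
    have "Lambda g \<Gamma> \<le> \<Gamma>*M + 11" unfolding M_def using Lambda_upper_gen[OF g] elim by auto
    hence "Lambda g \<Gamma> / \<Gamma> \<le> (\<Gamma>*M + 11)/\<Gamma>" using Gpos by (simp add: divide_right_mono)
    also have "\<dots> = M + 11/\<Gamma>" using Gpos by (simp add: field_simps)
    finally show ?case using elim by linarith
  qed
qed


lemma part1:
  fixes \<alpha> \<gamma> :: real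
  assumes a: "0 < \<alpha>" and g: "0 < \<gamma>"
    and E0lim: "((\<lambda>G. 2 * E0 \<alpha> G - \<alpha> * ln G) \<longlongrightarrow> \<alpha> - (1+\<alpha>)*ln(1+\<alpha>)) at_top"
  shows "((\<lambda>\<Gamma>. converse_bound \<alpha> \<gamma> \<Gamma> - \<alpha> * ln \<Gamma> - (\<alpha> - (1 + \<alpha>) * ln (1 + \<alpha>))) \<longlongrightarrow> 0) at_top"
proof -
  define C where "C = \<alpha> - (1 + \<alpha>) * ln (1 + \<alpha>)"
  have L: "((\<lambda>G. 2 * E0 \<alpha> G - \<alpha> * ln G - C) \<longlongrightarrow> 0) at_top"
    using tendsto_diff[OF E0lim tendsto_const[of C]] unfolding C_def by simp
  have ev1: "eventually (\<lambda>G. 2 * E0 \<alpha> G - \<alpha> * ln G < C + 1) at_top"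
    using order_tendstoD(2)[OF E0lim, of "C+1"] unfolding C_def by simp
  have ev2: "eventually (\<lambda>G. \<alpha> * ln G + (C + 1) \<le> \<gamma> * G) at_top"
    using a g by real_asymp
  have ev: "eventually (\<lambda>G. 2 * E0 \<alpha> G - \<alpha> * ln G - C = converse_bound \<alpha> \<gamma> G - \<alpha> * ln G - (\<alpha> - (1 + \<alpha>) * ln (1 + \<alpha>))) at_top"
    using ev1 ev2
  proof eventually_elim
    case (elim G)
    hence "2 * E0 \<alpha> G \<le> \<gamma> * G" by linarith
    thus ?case unfolding converse_bound_def C_def by (simp add: min_def)
  qed
  show ?thesis using Lim_transform_eventually[OF L ev] .
qed

lemma part2:
  fixes \<alpha> \<gamma> :: real
  assumes a: "0 < \<alpha>" and g: "0 < \<gamma>"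
  shows "((\<lambda>\<Gamma>. cap_bound \<alpha> \<gamma> \<Gamma> - \<alpha> * ln \<Gamma> - (\<alpha> * ln (\<gamma> / \<alpha>) + \<alpha>)) \<longlongrightarrow> 0) at_top"
proof -
  have ev: "eventually (\<lambda>G. 0 = cap_bound \<alpha> \<gamma> G - \<alpha> * ln G - (\<alpha> * ln (\<gamma> / \<alpha>) + \<alpha>)) at_top"
    using eventually_ge_at_top[of "\<alpha>/\<gamma> + 1"]
  proof eventually_elim
    case (elim G)
    have Gpos: "0 < G" using elim a g by (smt (verit) divide_pos_pos)
    have "\<not> G < \<alpha>/\<gamma>" using elim by simp
    hence "cap_bound \<alpha> \<gamma> G = \<alpha> * (ln (\<gamma> * G / \<alpha>) + 1)" unfolding cap_bound_def by simp
    moreover have "ln (\<gamma> * G / \<alpha>) = ln (\<gamma>/\<alpha>) + ln G"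
    proof -
      have eq: "\<gamma> * G / \<alpha> = (\<gamma>/\<alpha>) * G" by simp
      have "ln (\<gamma> * G / \<alpha>) = ln ((\<gamma>/\<alpha>) * G)" by (simp only: eq)
      also have "\<dots> = ln (\<gamma>/\<alpha>) + ln G" using a g Gpos by (intro ln_mult_pos) auto
      finally show ?thesis .
    qed
    ultimately show ?case by (simp add: algebra_simps)
  qed
  show ?thesis using Lim_transform_eventually[OF tendsto_const ev] .
qed

lemma part3:
  fixes \<alpha> :: real
  assumes a: "2 \<le> \<alpha>"
  shows "((\<lambda>\<Gamma>. replication_bound \<alpha> (\<alpha> / (2 * (1 + \<alpha>))) \<Gamma> - \<alpha> * ln \<Gamma> - \<alpha> * ln (exp 1 / 8)) \<longlongrightarrow> 0) at_top"
proof -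
  define \<gamma> where "\<gamma> = \<alpha> / (2 * (1 + \<alpha>))"
  have g3: "1/3 \<le> \<gamma>" unfolding \<gamma>_def using a by (simp add: field_simps)
  define k where "k = 1/2 - \<gamma>"
  have kpos: "0 < k" unfolding k_def \<gamma>_def using a by (simp add: field_simps)
  have gk: "\<gamma> = \<alpha> * k" unfolding k_def \<gamma>_def using a by (simp add: field_simps)
  have ln8: "ln (exp 1 / (8::real)) = 1 - 3 * ln (2::real)"
  proof -
    have h: "ln ((2::real)^3) = real 3 * ln 2" using ln_realpow[of 2 3] by simp
    hence "ln (8::real) = 3 * ln 2" by simp
    thus ?thesis by (simp add: ln_div)
  qed
  have ev1: "eventually (\<lambda>G. 0 \<le> G*k - ln G + 3 * ln 2 - 1 - 18/G) at_top" using kpos by real_asymp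
  have lim: "((\<lambda>G::real. 18*\<alpha>/G) \<longlongrightarrow> 0) at_top" by real_asymp
  have ev: "eventually (\<lambda>G. norm (replication_bound \<alpha> \<gamma> G - \<alpha> * ln G - \<alpha> * ln (exp 1 / 8)) \<le> 18*\<alpha>/G) at_top"
    using ev1 eventually_ge_at_top[of 2000]
  proof eventually_elim
    case (elim G)
    have L: "\<bar>Lambda \<gamma> G - (G*(1/2-\<gamma>) - ln G + 3*ln 2 - 1)\<bar> \<le> 18/G" by (rule Lambda3[OF g3 elim(2)])
    define e where "e = Lambda \<gamma> G - (G*k - ln G + 3*ln 2 - 1)"
    have e: "\<bar>e\<bar> \<le> 18/G" using L unfolding e_def k_def .
    have Lpos: "0 \<le> Lambda \<gamma> G" using e elim(1) unfolding e_def by (simp add: abs_le_iff)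
    hence pp: "pos_part (\<alpha> * Lambda \<gamma> G) = \<alpha> * Lambda \<gamma> G" unfolding pos_part_def using a by simp
    have "replication_bound \<alpha> \<gamma> G - \<alpha> * ln G - \<alpha> * ln (exp 1 / 8) = \<gamma>*G - \<alpha>*(G*k - ln G + 3*ln 2 - 1 + e) - \<alpha> * ln G - \<alpha> * (1 - 3 * ln 2)"
      unfolding replication_bound_def pp ln8 e_def by simp
    also have "\<dots> = - \<alpha> * e" unfolding gk by (simp add: algebra_simps)
    finally have "norm (replication_bound \<alpha> \<gamma> G - \<alpha> * ln G - \<alpha> * ln (exp 1 / 8)) = \<alpha> * \<bar>e\<bar>"
      using a by (simp add: abs_mult)
    also have "\<dots> \<le> \<alpha> * (18/G)" using e a by (intro mult_left_mono) auto
    also have "\<alpha> * (18/G) = 18*\<alpha>/G" by simp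
    finally show ?case .
  qed
  show ?thesis unfolding \<gamma>_def[symmetric] by (rule Lim_null_comparison[OF ev lim])
qed

lemma afg_le:
  fixes \<alpha> g \<rho> :: real
  assumes a: "0 < \<alpha>" and r: "0 < \<rho>" "\<rho> \<le> 1" and gT: "That \<alpha> < g"
  shows "\<alpha> * fg g \<rho> \<le> That \<alpha>"
proof -
  define T where "T = \<alpha>*\<rho>/((1+\<rho>)*(\<rho>+\<alpha>))"
  have TT: "T \<le> That \<alpha>" unfolding T_def by (rule T_bound[OF a r])
  have n: "1+\<rho> \<noteq> 0" "\<rho>+\<alpha> \<noteq> 0" "\<rho> \<noteq> 0" using a r by auto
  have t1: "T * ((\<rho>+\<alpha>)/\<rho>) = \<alpha>/(1+\<rho>)"
  proof -
    have "T = \<alpha>/(1+\<rho>) * (\<rho>/(\<rho>+\<alpha>))" unfolding T_def by simp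
    hence "T * ((\<rho>+\<alpha>)/\<rho>) = \<alpha>/(1+\<rho>) * ((\<rho>/(\<rho>+\<alpha>)) * ((\<rho>+\<alpha>)/\<rho>))" by (simp add: mult.assoc)
    also have "(\<rho>/(\<rho>+\<alpha>)) * ((\<rho>+\<alpha>)/\<rho>) = 1" using n by simp
    finally show ?thesis by simp
  qed
  have t2: "g * ((\<rho>+\<alpha>)/\<rho>) = g + \<alpha>*g/\<rho>" using n by (simp add: field_simps)
  have id: "\<alpha> * fg g \<rho> = (T - g) * ((\<rho>+\<alpha>)/\<rho>) + g"
    unfolding fg_def left_diff_distrib t1 t2 by (simp add: right_diff_distrib mult.commute)
  have k1: "1 \<le> (\<rho>+\<alpha>)/\<rho>" using a r by simp
  have "(T - g) * ((\<rho>+\<alpha>)/\<rho>) \<le> (T - g) * 1" using k1 TT gT by (intro mult_left_mono_neg) auto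
  thus ?thesis using id TT by simp
qed

lemma part4:
  fixes \<alpha> :: real
  assumes a: "0 < \<alpha>" "\<alpha> < 2"
  shows "\<exists>c>0. ((\<lambda>\<Gamma>. replication_bound \<alpha> (gamma_bar \<alpha>) \<Gamma> / \<Gamma>) \<longlongrightarrow> c) at_top"
proof -
  define g where "g = gamma_bar \<alpha>"
  have gT: "That \<alpha> < g" unfolding g_def by (rule gamma_bar_gt[OF a])
  have T0: "0 < That \<alpha>" unfolding That_def using a by simp
  have g0: "0 < g" using gT T0 by simp
  define M where "M = (SUP \<rho>\<in>{0<..1}. fg g \<rho>)"
  have LL: "((\<lambda>\<Gamma>. Lambda g \<Gamma> / \<Gamma>) \<longlongrightarrow> M) at_top" unfolding M_def by (rule Lambda_lim[OF g0])
  have "M \<le> That \<alpha> / \<alpha>" unfolding M_def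
  proof (rule cSUP_least)
    show "{0<..1::real} \<noteq> {}" by auto
    fix \<rho> :: real assume "\<rho> \<in> {0<..1}"
    hence "\<alpha> * fg g \<rho> \<le> That \<alpha>" using afg_le[OF a(1) _ _ gT] by auto
    thus "fg g \<rho> \<le> That \<alpha> / \<alpha>" using a by (simp add: pos_le_divide_eq mult.commute)
  qed
  hence aM: "\<alpha> * M \<le> That \<alpha>" using a by (simp add: pos_le_divide_eq mult.commute)
  define c where "c = g - max (\<alpha> * M) 0"
  have cpos: "0 < c" unfolding c_def using aM gT g0 by (simp add: max_def)
  have lim: "((\<lambda>\<Gamma>. g - max (\<alpha> * (Lambda g \<Gamma> / \<Gamma>)) 0) \<longlongrightarrow> c) at_top"
    unfolding c_def by (intro tendsto_intros LL)
  have ev: "eventually (\<lambda>\<Gamma>. g - max (\<alpha> * (Lambda g \<Gamma> / \<Gamma>)) 0 = replication_bound \<alpha> g \<Gamma> / \<Gamma>) at_top"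
    using eventually_gt_at_top[of 0]
  proof eventually_elim
    case (elim G)
    have "max (\<alpha> * Lambda g G) 0 / G = max (\<alpha> * (Lambda g G / G)) 0" using elim
      by (auto simp: max_def divide_le_0_iff)
    thus ?case unfolding replication_bound_def pos_part_def using elim by (simp add: diff_divide_distrib)
  qed
  show ?thesis unfolding g_def[symmetric] using cpos Lim_transform_eventually[OF lim ev] by blast
qed

theorem mainTheorem5:
  fixes \<alpha> \<gamma> :: real
  assumes alpha_pos: "0 < \<alpha>"
    and gamma_pos: "0 < \<gamma>"
    and gamma_ge2: "2 \<le> \<alpha> \<longrightarrow> \<gamma> = \<alpha> / (2 * (1 + \<alpha>))"
  shows "((\<lambda>\<Gamma>. converse_bound \<alpha> \<gamma> \<Gamma> - \<alpha> * ln \<Gamma>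
              - (\<alpha> - (1 + \<alpha>) * ln (1 + \<alpha>))) \<longlongrightarrow> 0) at_top
       \<and> ((\<lambda>\<Gamma>. cap_bound \<alpha> \<gamma> \<Gamma> - \<alpha> * ln \<Gamma>
              - (\<alpha> * ln (\<gamma> / \<alpha>) + \<alpha>)) \<longlongrightarrow> 0) at_top
       \<and> (2 \<le> \<alpha> \<longrightarrow> ((\<lambda>\<Gamma>. replication_bound \<alpha> \<gamma> \<Gamma> - \<alpha> * ln \<Gamma>
              - \<alpha> * ln (exp 1 / 8)) \<longlongrightarrow> 0) at_top)
       \<and> (\<alpha> < 2 \<longrightarrow> (\<exists>c>0. ((\<lambda>\<Gamma>. replication_bound \<alpha> (gamma_bar \<alpha>) \<Gamma> / \<Gamma>)
              \<longlongrightarrow> c) at_top))"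
proof (intro conjI impI)
  show "((\<lambda>\<Gamma>. converse_bound \<alpha> \<gamma> \<Gamma> - \<alpha> * ln \<Gamma>
              - (\<alpha> - (1 + \<alpha>) * ln (1 + \<alpha>))) \<longlongrightarrow> 0) at_top"
    by (rule part1[OF alpha_pos gamma_pos E0_lim[OF alpha_pos]])
  show "((\<lambda>\<Gamma>. cap_bound \<alpha> \<gamma> \<Gamma> - \<alpha> * ln \<Gamma>
              - (\<alpha> * ln (\<gamma> / \<alpha>) + \<alpha>)) \<longlongrightarrow> 0) at_top"
    by (rule part2[OF alpha_pos gamma_pos])
  assume a2: "2 \<le> \<alpha>"
  hence "\<gamma> = \<alpha> / (2 * (1 + \<alpha>))" using gamma_ge2 by simp
  thus "((\<lambda>\<Gamma>. replication_bound \<alpha> \<gamma> \<Gamma> - \<alpha> * ln \<Gamma>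
              - \<alpha> * ln (exp 1 / 8)) \<longlongrightarrow> 0) at_top"
    using part3[OF a2] by simp
next
  assume "\<alpha> < 2"
  thus "\<exists>c>0. ((\<lambda>\<Gamma>. replication_bound \<alpha> (gamma_bar \<alpha>) \<Gamma> / \<Gamma>) \<longlongrightarrow> c) at_top"
    by (rule part4[OF alpha_pos])
qed

end
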